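(* Let $[\alpha]_{A,C}\psi$ be a well-formed ac-box and let $\beta$ be a program such that $\alpha\parallel\beta$ is a program with recorder $h$, where $\beta$ does not interfere with $[\alpha\parallel\_\,]_{A,C}\psi$, i.e. for all $\chi\in\{A,C,\psi\}$: $FV(\chi)\cap BV(\beta)\subseteq\{\mu,\mu',h\}$ and $CN_{\{h\}}(\chi)\cap CN(\beta)\subseteq CN(\alpha)$. Let $(v,\tau\downarrow\alpha,w_\alpha)\in[\![\alpha]\!]$ and $(v,\tau\downarrow\beta,w_\beta)\in[\![\beta]\!]$ with $w=w_\alpha\bowtie w_\beta$, with $w=w_\alpha=w_\beta$ on $\{\mu,\mu'\}$ if $w\ne\bot$, and with $\tau\downarrow(\alpha\parallel\beta)=\tau$ (so $(v,\tau,w)\in[\![\alpha\parallel\beta]\!]$). Then for $\lambda\in\{A,C\}$: (1) $v\cdot(\tau\downarrow\alpha)\models\lambda$ iff $v\cdot\tau\models\lambda$; (2) if $w\ne\bot$, then $w_\alpha\cdot(\tau\downarrow\alpha)\models\psi$ iff $w\cdot\tau\models\psi$.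
   Context: Logic $\mathsf{dL}_{\mathsf{CHP}}$. Real variables (with differential variables $x'$), trace variables, channels $\mathbb N$; $\mu,\mu'$ are the global time variables. Terms: real terms $x\mid r\in\mathbb Q\mid e_1+e_2\mid e_1\cdot e_2\mid(p)'\mid\mathrm{ch}(te)\mid\mathrm{val}(te)\mid\mathrm{time}(te)\mid|te|$ and trace terms $h\mid\epsilon\mid\langle ch,p_1,p_2\rangle\mid te_1\cdot te_2\mid te\downarrow Y\mid te[e]$ ($p$ polynomials with rational coefficients, $Y$ finite or cofinite channel set). Programs: $x:=p\mid x:=*\mid ?\chi\mid x'=p\,\&\,\chi\mid\alpha;\beta\mid\alpha\cup\beta\mid\alpha^*\mid ch(h)!p\mid ch(h)?x\mid\alpha\parallel\beta$ with, in $\alpha\parallel\beta$, $BV(\alpha)\cap BV(\beta)\subseteq\{\mu,\mu'\}\cup\mathrm{TVar}$, and each program binding at most one trace variable, its recorder. Formulas: $e_1\sim e_2$, $\neg,\wedge,\forall$, $[\alpha]\psi$, $\langle\alpha\rangle\psi$, $[\alpha]_{A,C}\psi$, $\langle\alpha\rangle_{A,C}\psi$; the ac-box $[\alpha]_{A,C}\psi$ is well-formed if $FV(A,C)\cap(BV(\alpha)\cup\{\mu,\mu'\})$ contains only trace variables. Semantics. Traces are finite sequences of events $\langle ch,a,d\rangle\in\mathbb N\times\mathbb R\times\mathbb R$; $\tau\downarrow Y$ deletes events with channel outside $Y$; a recorded trace $(h,\tau)$; $v\cdot(h,\tau)$ is the state $v$ with $v(h)$ replaced by $v(h)\cdot\tau$.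 $\tau\downarrow\gamma$ is projection onto the channels occurring in program $\gamma$. A program denotes a set $[\![\alpha]\!]$ of runs $(v,\tau,w)$, $v$ a state, $\tau$ a trace recorded by the program's recorder, $w$ a final state or $\bot$ (unfinished); for parallel composition, $[\![\alpha\parallel\beta]\!]=\{(v,\tau,w_\alpha\bowtie w_\beta):(v,\tau\downarrow\alpha,w_\alpha)\in[\![\alpha]\!],(v,\tau\downarrow\beta,w_\beta)\in[\![\beta]\!],w_\alpha=w_\beta\text{ on }\{\mu,\mu'\},\tau\downarrow(\alpha\parallel\beta)=\tau\}$, where $w_\alpha\bowtie w_\beta$ is $\bot$ if $w_\alpha=\bot$ or $w_\beta=\bot$, and otherwise equals $w_\alpha$ on $BV(\alpha)$ and $w_\beta$ elsewhere. (Other program constructs have the standard communicating-hybrid-program semantics: assignments, tests, ODEs, choice, prefix-closed sequential composition, iteration, and send/receive that append an event $\langle ch,\text{value},v(\mu)\rangle$.) $v\models\phi$ denotes satisfaction. Static semantics (formulas viewed as truth-valued). $FV(e)$: variables $z$ such that two states differing only on $z$ give $e$ different values. For $X\subseteq\mathrm{TVar}$, $v\downarrow_XY$ replaces $v(h)$ by $v(h)\downarrow Y$ for $h\in X$; $CN_X(e)$: channels $ch$ such that some $v,\tilde v$ with $v\downarrow_X(\mathbb N\setminus\{ch\})=\tilde v\downarrow_X(\mathbb N\setminus\{ch\})$ give $e$ different values. $BV(\alpha)$: variables $z$ with $(w\cdot\tau)(z)\ne v(z)$ for some $(v,\tau,w)\in[\![\alpha]\!]$, $w\ne\bot$. $CN(\alpha)$: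 channels $ch$ with $\tau\downarrow\{ch\}\ne\epsilon$ for some run of $\alpha$. *)

theory Defs
  imports Complex_Main
begin

text \<open>Semantic (denotational) model of the ingredients of the statement.
  Channels are natural numbers; events are triples (channel, value, time stamp).\<close>

type_synonym event = "nat \<times> real \<times> real"
type_synonym trace = "event list"

text \<open>Real variables: ordinary variables, differential variables x', and the
  global time variable mu together with its differential mu'.\<close>
datatype rvar = Var nat | DVar nat | Mu | MuD

datatype var = R rvar | T nat

record state =
  rst :: "rvar \<Rightarrow> real"
  tst :: "nat \<Rightarrow> trace"

definition differs :: "state \<Rightarrow> state \<Rightarrow> var \<Rightarrow> bool" where
  "differs s u z = (case z of R x \<Rightarrow> rst s x \<noteq> rst u x | T g \<Rightarrow> tst s g \<noteq> tst u g)"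

definition proj :: "trace \<Rightarrow> nat set \<Rightarrow> trace" where
  "proj \<tau> Y = filter (\<lambda>e. fst e \<in> Y) \<tau>"

definition rec :: "state \<Rightarrow> nat \<Rightarrow> trace \<Rightarrow> state" where
  "rec v h \<tau> = v\<lparr>tst := (tst v)(h := tst v h @ \<tau>)\<rparr>"

definition proj_state :: "nat set \<Rightarrow> nat set \<Rightarrow> state \<Rightarrow> state" where
  "proj_state X Y v = v\<lparr>tst := (\<lambda>g. if g \<in> X then proj (tst v g) Y else tst v g)\<rparr>"

type_synonym fml = "state \<Rightarrow> bool"

definition FVf :: "fml \<Rightarrow> var set" where
  "FVf P = {z. \<exists>v u. (\<forall>z'. z' \<noteq> z \<longrightarrow> \<not> differs v u z') \<and> P v \<noteq> P u}"

definition CNf :: "nat set \<Rightarrow> fml \<Rightarrow> nat set" where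
  "CNf X P = {ch. \<exists>v u. proj_state X (- {ch}) v = proj_state X (- {ch}) u \<and> P v \<noteq> P u}"

text \<open>Runs (v, tau, w); w = None represents the unfinished outcome \<bottom>.\<close>
type_synonym run = "state \<times> trace \<times> state option"

text \<open>A program is represented by its denotation (set of runs) together with the set
  of channels occurring in it (used for the projection tau \<down> alpha).\<close>
record prog =
  runs :: "run set"
  chans :: "nat set"

definition BVp :: "nat \<Rightarrow> prog \<Rightarrow> var set" where
  "BVp h \<alpha> = {z. \<exists>v \<tau> w. (v, \<tau>, Some w) \<in> runs \<alpha> \<and> differs (rec w h \<tau>) v z}"

definition CNp :: "prog \<Rightarrow> nat set" where
  "CNp \<alpha> = {ch. \<exists>v \<tau> w. (v, \<tau>, w) \<in> runs \<alpha> \<and> proj \<tau> {ch} \<noteq> []}"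

text \<open>Properties enjoyed by the denotation of every dL_CHP program: final states leave
  trace variables untouched (the trace is recorded separately), only finitely many real
  variables are bound, and recorded traces only use channels occurring in the program.\<close>
definition wf_prog :: "nat \<Rightarrow> prog \<Rightarrow> bool" where
  "wf_prog h \<alpha> \<longleftrightarrow>
     (\<forall>v \<tau> w. (v, \<tau>, Some w) \<in> runs \<alpha> \<longrightarrow> tst w = tst v)
   \<and> finite {x. R x \<in> BVp h \<alpha>}
   \<and> (\<forall>v \<tau> w. (v, \<tau>, w) \<in> runs \<alpha> \<longrightarrow> fst ` set \<tau> \<subseteq> chans \<alpha>)"

definition join_state :: "var set \<Rightarrow> state \<Rightarrow> state \<Rightarrow> state" where
  "join_state B a b =
     \<lparr>rst = (\<lambda>x. if R x \<in> B then rst a x else rst b x),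
      tst = (\<lambda>g. if T g \<in> B then tst a g else tst b g)\<rparr>"

fun join :: "var set \<Rightarrow> state option \<Rightarrow> state option \<Rightarrow> state option" where
  "join B (Some a) (Some b) = Some (join_state B a b)"
| "join B _ _ = None"

end

theory Submission
  imports Defs
begin

lemma tst_rec: "tst (rec s h t) = (tst s)(h := tst s h @ t)" unfolding rec_def by simp
lemma rst_rec: "rst (rec s h t) = rst s" unfolding rec_def by simp
lemma tst_ps: "tst (proj_state X Y v) = (\<lambda>g. if g\<in>X then proj (tst v g) Y else tst v g)" unfolding proj_state_def by simp
lemma rst_ps: "rst (proj_state X Y v) = rst v" unfolding proj_state_def by simp
lemma tst_js: "tst (join_state B a b) = (\<lambda>g. if T g \<in> B then tst a g else tst b g)" unfolding join_state_def by simp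
lemma rst_js: "rst (join_state B a b) = (\<lambda>x. if R x \<in> B then rst a x else rst b x)" unfolding join_state_def by simp

lemma chan_remove:
  assumes "finite S" "\<forall>c\<in>S. c \<notin> CNf {h} P"
  shows "P (rec s h (filter (\<lambda>e. fst e \<notin> S) \<sigma>)) = P (rec s h \<sigma>)"
  using assms
proof (induction S rule: finite_induct)
  case empty then show ?case by simp
next
  case (insert c S)
  define \<sigma>' where "\<sigma>' = filter (\<lambda>e. fst e \<notin> S) \<sigma>"
  have e: "filter (\<lambda>e. fst e \<notin> insert c S) \<sigma> = filter (\<lambda>e. fst e \<noteq> c) \<sigma>'"
    unfolding \<sigma>'_def by (auto intro: filter_cong)
  have "proj_state {h} (- {c}) (rec s h (filter (\<lambda>e. fst e \<noteq> c) \<sigma>'))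
      = proj_state {h} (- {c}) (rec s h \<sigma>')"
    apply (rule state.equality)
    apply (simp_all add: tst_ps rst_ps tst_rec rst_rec proj_def filter_filter)
    apply (rule ext) apply (simp add: tst_rec proj_def)
    done
  moreover have "c \<notin> CNf {h} P" using insert by auto
  ultimately have "P (rec s h (filter (\<lambda>e. fst e \<noteq> c) \<sigma>')) = P (rec s h \<sigma>')"
    unfolding CNf_def by blast
  then show ?case using insert unfolding e \<sigma>'_def by simp
qed

lemma var_coinc:
  assumes "finite X" "\<forall>x\<in>X. R x \<notin> FVf P"
    "\<forall>x. x \<notin> X \<longrightarrow> rst s x = rst u x" "tst s = tst u"
  shows "P s = P u"
  using assms
proof (induction X arbitrary: u rule: finite_induct)
  case empty
  then have "s = u" by (cases s, cases u) (auto intro: ext)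
  then show ?case by simp
next
  case (insert x X)
  define u' where "u' = u\<lparr>rst := (rst u)(x := rst s x)\<rparr>"
  have "P s = P u'"
    using insert.IH insert.prems unfolding u'_def by auto
  moreover have "\<forall>z'. z' \<noteq> R x \<longrightarrow> \<not> differs u' u z'"
    unfolding u'_def differs_def by (auto split: var.splits)
  moreover have "R x \<notin> FVf P" using insert by auto
  ultimately show ?case unfolding FVf_def by blast
qed

theorem lemmaA1:
  fixes \<alpha> \<beta> :: prog and A C \<psi> :: fml and h :: nat and v :: state and \<tau> :: trace
    and w\<^sub>\<alpha> w\<^sub>\<beta> w :: "state option"
  assumes wf_\<alpha>: "wf_prog h \<alpha>" and wf_\<beta>: "wf_prog h \<beta>"
    and par: "BVp h \<alpha> \<inter> BVp h \<beta> \<subseteq> {R Mu, R MuD} \<union> range T"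
    and ac_wf: "(FVf A \<union> FVf C) \<inter> (BVp h \<alpha> \<union> {R Mu, R MuD}) \<subseteq> range T"
    and nonint: "\<forall>\<chi>\<in>{A, C, \<psi>}. FVf \<chi> \<inter> BVp h \<beta> \<subseteq> {R Mu, R MuD, T h}
                             \<and> CNf {h} \<chi> \<inter> CNp \<beta> \<subseteq> CNp \<alpha>"
    and run\<^sub>\<alpha>: "(v, proj \<tau> (chans \<alpha>), w\<^sub>\<alpha>) \<in> runs \<alpha>"
    and run\<^sub>\<beta>: "(v, proj \<tau> (chans \<beta>), w\<^sub>\<beta>) \<in> runs \<beta>"
    and w_def: "w = join (BVp h \<alpha>) w\<^sub>\<alpha> w\<^sub>\<beta>"
    and mu: "\<forall>a b. w\<^sub>\<alpha> = Some a \<longrightarrow> w\<^sub>\<beta> = Some b \<longrightarrow>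
               rst a Mu = rst b Mu \<and> rst a MuD = rst b MuD"
    and tr: "proj \<tau> (chans \<alpha> \<union> chans \<beta>) = \<tau>"
  shows "(\<forall>L\<in>{A, C}. L (rec v h (proj \<tau> (chans \<alpha>))) = L (rec v h \<tau>))
       \<and> (\<forall>a w'. w = Some w' \<longrightarrow> w\<^sub>\<alpha> = Some a \<longrightarrow>
              (\<psi> (rec a h (proj \<tau> (chans \<alpha>))) = \<psi> (rec w' h \<tau>)))"
proof -
  define S where "S = fst ` set \<tau> - chans \<alpha>"
  have finS: "finite S" unfolding S_def by simp
  have pe: "proj \<tau> (chans \<alpha>) = filter (\<lambda>e. fst e \<notin> S) \<tau>"
    unfolding proj_def S_def by (auto intro: filter_cong)
  have chSub: "\<forall>c\<in>S. c \<in> CNp \<beta> \<and> c \<notin> CNp \<alpha>"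
  proof
    fix c assume c: "c \<in> S"
    then obtain e where e: "e \<in> set \<tau>" "fst e = c" "c \<notin> chans \<alpha>" unfolding S_def by auto
    have "e \<in> set (proj \<tau> (chans \<alpha> \<union> chans \<beta>))" using tr e by simp
    then have "c \<in> chans \<beta>" using e unfolding proj_def by auto
    then have "e \<in> set (proj (proj \<tau> (chans \<beta>)) {c})" using e unfolding proj_def by auto
    then have "c \<in> CNp \<beta>" using run\<^sub>\<beta> unfolding CNp_def by fastforce
    moreover have "c \<notin> CNp \<alpha>"
    proof
      assume "c \<in> CNp \<alpha>"
      then obtain v' t' w'' where r: "(v', t', w'') \<in> runs \<alpha>" "proj t' {c} \<noteq> []"
        unfolding CNp_def by auto
      then obtain e' where "e' \<in> set t'" "fst e' = c" unfolding proj_def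
        by (metis (mono_tags, lifting) empty_filter_conv singletonD)
      then show False using wf_\<alpha> r e unfolding wf_prog_def by blast
    qed
    ultimately show "c \<in> CNp \<beta> \<and> c \<notin> CNp \<alpha>" by blast
  qed
  have chanP: "\<And>P s. P \<in> {A, C, \<psi>} \<Longrightarrow> P (rec s h (proj \<tau> (chans \<alpha>))) = P (rec s h \<tau>)"
  proof -
    fix P s assume P: "P \<in> {A, C, \<psi>}"
    have "\<forall>c\<in>S. c \<notin> CNf {h} P" using nonint P chSub by blast
    then show "P (rec s h (proj \<tau> (chans \<alpha>))) = P (rec s h \<tau>)"
      unfolding pe using chan_remove finS by blast
  qed
  have part2: "\<psi> (rec a h (proj \<tau> (chans \<alpha>))) = \<psi> (rec w' h \<tau>)"
    if ww: "w = Some w'" "w\<^sub>\<alpha> = Some a" for a w'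
  proof -
    obtain b where b: "w\<^sub>\<beta> = Some b" using ww w_def by (cases w\<^sub>\<beta>) auto
    have w': "w' = join_state (BVp h \<alpha>) a b" using ww w_def b by simp
    have ta: "tst a = tst v" using wf_\<alpha> run\<^sub>\<alpha> ww unfolding wf_prog_def by blast
    have tb: "tst b = tst v" using wf_\<beta> run\<^sub>\<beta> b unfolding wf_prog_def by blast
    define X where "X = {x. R x \<in> BVp h \<beta>} - {Mu, MuD}"
    have finX: "finite X" using wf_\<beta> unfolding X_def wf_prog_def by auto
    have X1: "\<forall>x\<in>X. R x \<notin> FVf \<psi>" using nonint unfolding X_def by auto
    have rb: "rst b x = rst v x" if "R x \<notin> BVp h \<beta>" for x
    proof (rule ccontr)
      assume "rst b x \<noteq> rst v x"
      then have "differs (rec b h (proj \<tau> (chans \<beta>))) v (R x)"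
        unfolding differs_def by (simp add: rst_rec)
      then show False using that run\<^sub>\<beta> b unfolding BVp_def by blast
    qed
    have ra: "rst a x = rst v x" if "R x \<notin> BVp h \<alpha>" for x
    proof (rule ccontr)
      assume "rst a x \<noteq> rst v x"
      then have "differs (rec a h (proj \<tau> (chans \<alpha>))) v (R x)"
        unfolding differs_def by (simp add: rst_rec)
      then show False using that run\<^sub>\<alpha> ww unfolding BVp_def by blast
    qed
    have mab: "rst a Mu = rst b Mu" "rst a MuD = rst b MuD" using mu ww b by auto
    have "\<forall>x. x \<notin> X \<longrightarrow> rst (rec a h (proj \<tau> (chans \<alpha>))) x = rst (rec w' h (proj \<tau> (chans \<alpha>))) x"
    proof (intro allI impI)
      fix x assume "x \<notin> X"
      then show "rst (rec a h (proj \<tau> (chans \<alpha>))) x = rst (rec w' h (proj \<tau> (chans \<alpha>))) x"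
        unfolding w' X_def using ra rb mab by (auto simp: rst_rec rst_js)
    qed
    moreover have "tst (rec a h (proj \<tau> (chans \<alpha>))) = tst (rec w' h (proj \<tau> (chans \<alpha>)))"
      unfolding w' using ta tb by (auto simp: tst_rec tst_js intro!: ext)
    ultimately have "\<psi> (rec a h (proj \<tau> (chans \<alpha>))) = \<psi> (rec w' h (proj \<tau> (chans \<alpha>)))"
      using var_coinc[OF finX X1] by blast
    also have "\<dots> = \<psi> (rec w' h \<tau>)" using chanP by blast
    finally show ?thesis .
  qed
  show ?thesis using chanP part2 by blast
qed

end
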